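(* Let $k\in\omega\setminus\{0,1\}$, let $A$ be a nontrivial closed class of decision tables from $\mathcal M_k^\infty$, $\psi$ a bounded complexity measure, and suppose the function $L_{\psi,A}$ is everywhere defined. Then for every $n\in\omega$ with $L_{\psi,A}(n)>0$, the value $\mathcal H^\infty_{\psi,A}(n)$ is defined and $\mathcal H^\infty_{\psi,A}(n)\ge\log_k L_{\psi,A}(n)$.
   Context: Notation: $\omega=\{0,1,2,\dots\}$; $\mathcal P(\omega)$ is the set of nonempty finite subsets of $\omega$; for $k\in\omega\setminus\{0,1\}$, $E_k=\{0,1,\dots,k-1\}$. $P=\{f_i:i\in\omega\}$ is a set of attributes, $f_i\neq f_j$ for $i\ne j$. Decision tables: $\mathcal M_k^\infty$ is the set of rectangular tables filled with numbers from $E_k$, whose columns are labeled with pairwise different attributes from $P$, whose rows are pairwise different, and each row of which is labeled with a set from $\mathcal P(\omega)$ (its set of decisions). The empty table (no rows) is denoted $\Lambda$ and belongs to $\mathcal M_k^\infty$. For $T\in\mathcal M_k^\infty$: $\Delta(T)$ is the set of rows; $\Pi(T)$ is the intersection of the decision sets of all rows (common decisions); $\mathrm{At}(T)$ is the set of attributes labeling columns. For nonempty $T$, $\Omega_k(T)$ is the set of finite words (including the empty word $\lambda$) over the alphabet $\{(f_i,\delta):f_i\in\mathrm{At}(T),\delta\in E_k\}$; for $\alpha=(f_{i_1},\delta_1)\cdots(f_{i_m},\delta_m)$, $T\alpha$ is the subtable of $T$ consisting of the rows having value $\delta_j$ in the column $f_{i_j}$ for all $j$, and $T\lambda=T$.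 Operations: for $D\subseteq\mathrm{At}(T)$, $I(D,T)$ is obtained from $T$ by deleting the columns labeled with attributes from $D$ and, in each group of rows coinciding on the remaining columns, keeping only the first row; $I(\mathrm{At}(T),T)=\Lambda$. For $\nu:E_k^{|\mathrm{At}(T)|}\to\mathcal P(\omega)$, $J(\nu,T)$ is obtained by replacing the decision set of each row $\bar\delta$ by $\nu(\bar\delta)$. $[T]=\{J(\nu,I(D,T)):D\subseteq\mathrm{At}(T),\ \nu:E_k^{|\mathrm{At}(T)\setminus D|}\to\mathcal P(\omega)\}$; for nonempty $A\subseteq\mathcal M_k^\infty$, $[A]=\bigcup_{T\in A}[T]$. $A$ is a closed class if $[A]=A$; nontrivial if it contains a nonempty table. Decision trees: a $k$-decision tree is a finite directed rooted tree with at least two nodes in which the root and the edges leaving the root are unlabeled, each terminal node is labeled with a decision from $\omega$, and each other node is labeled with an attribute from $P$, each edge leaving such a node being labeled with a number from $E_k$. $\mathrm{At}(\Gamma)$ is the set of attributes labeling nodes of $\Gamma$. For a complete path $\tau=v_1,d_1,\dots,v_m,d_m,v_{m+1}$ (from the root to a terminal node), $\pi(\tau)=\lambda$ if $m=1$, and otherwise $\pi(\tau)=(f_{i_2},\delta_2)\cdots(f_{i_m},\delta_m)$ where $v_j$ is labeled $f_{i_j}$ and $d_j$ is labeled $\delta_j$; $T(\tau)=T\pi(\tau)$. For $T\ne\Lambda$, a nondeterministic decision tree for $T$ is a $k$-decision tree $\Gamma$ with $\mathrm{At}(\Gamma)\subseteq\mathrm{At}(T)$ such that every row of $T$ belongs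 to $T(\tau)$ for some complete path $\tau$, and for every complete path $\tau$ either $T(\tau)=\Lambda$ or the decision at the terminal node of $\tau$ belongs to $\Pi(T(\tau))$. A deterministic decision tree for $T$ is a nondeterministic decision tree for $T$ in which, additionally, exactly one edge leaves the root and the edges leaving any node that is neither the root nor terminal are labeled with pairwise different numbers. Complexity measures: a partially bounded complexity measure is a function $\psi:P^*\to\omega$ on finite words over $P$ such that for all words $\alpha_1,\alpha_2$: $\psi(\alpha_1)=0$ iff $\alpha_1=\lambda$; $\psi(\alpha_1)$ is invariant under permutation of letters; $\psi(\alpha_1)\le\psi(\alpha_1\alpha_2)$; $\psi(\alpha_1\alpha_2)\le\psi(\alpha_1)+\psi(\alpha_2)$. It is bounded if in addition $\psi(\alpha)\ge|\alpha|$ for all $\alpha$. $\psi$ is extended to words $(f_{i_1},\delta_1)\cdots(f_{i_m},\delta_m)$ by $\psi(f_{i_1}\cdots f_{i_m})$ ($\psi(\lambda)=0$). For a $k$-decision tree $\Gamma$, $\psi(\Gamma)=\max_\tau\psi(\pi(\tau))$ over complete paths. For $T\ne\Lambda$, $\psi^d(T)$ (resp. $\psi^a(T)$) is the minimum of $\psi(\Gamma)$ over deterministic (resp. nondeterministic) decision trees $\Gamma$ for $T$; $\psi^d(\Lambda)=\psi^a(\Lambda)=0$. Covers: for $T\ne\Lambda$ and $n\in\omega$, $\Omega_k^n(T)=\{\alpha\in\Omega_k(T):\psi(\alpha)\le n\}$. A finite set $U\subseteq\Omega_k^n(T)$ is a $(\psi,n)$-cover of $T$ if $\bigcup_{\alpha\in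 U}\Delta(T\alpha)=\Delta(T)$; it is irreducible if no proper subset of $U$ is a $(\psi,n)$-cover of $T$. $l_\psi(T,n)$ is the maximum cardinality of an irreducible $(\psi,n)$-cover of $T$; $l_\psi(\Lambda,n)=0$. $L_{\psi,A}(n)$ is undefined if $\{l_\psi(T,n):T\in A\}$ is infinite, and otherwise equals its maximum. $\mathcal H^\infty_{\psi,A}(n)$ is undefined if $\{\psi^d(T):T\in A,\ \psi^a(T)\le n\}$ is infinite, and otherwise equals its maximum. *)

theory Defs
  imports Complex_Main "HOL-Library.Multiset"
begin

text \<open>Attributes f_i are represented by their index i :: nat, decisions by nat,
 values of E_k by nat (< k).  A table is a pair (column attribute list, row list);
 each row is a pair (value list, decision set).  Row order is kept because the
 operation I keeps the first row of each group.\<close>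

type_synonym dtable = "nat list \<times> (nat list \<times> nat set) list"

definition Lambda :: dtable where "Lambda = ([], [])"

definition At :: "dtable \<Rightarrow> nat set" where "At T = set (fst T)"

definition Delta :: "dtable \<Rightarrow> (nat list \<times> nat set) set" where "Delta T = set (snd T)"

definition wf_table :: "nat \<Rightarrow> dtable \<Rightarrow> bool" where
  "wf_table k T \<longleftrightarrow>
     distinct (fst T) \<and> distinct (map fst (snd T)) \<and>
     (\<forall>rd \<in> set (snd T). length (fst rd) = length (fst T) \<and> (\<forall>v \<in> set (fst rd). v < k)
        \<and> finite (snd rd) \<and> snd rd \<noteq> {}) \<and>
     (snd T = [] \<longleftrightarrow> fst T = [])"

definition M_inf :: "nat \<Rightarrow> dtable set" where "M_inf k = {T. wf_table k T}"

definition Pi_rows :: "(nat list \<times> nat set) list \<Rightarrow> nat set" where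
  "Pi_rows rs = (\<Inter>rd \<in> set rs. snd rd)"

definition sat :: "dtable \<Rightarrow> (nat \<times> nat) list \<Rightarrow> nat list \<Rightarrow> bool" where
  "sat T \<alpha> r \<longleftrightarrow> (\<forall>p \<in> set \<alpha>. \<exists>i < length (fst T). fst T ! i = fst p \<and> r ! i = snd p)"

definition sub :: "dtable \<Rightarrow> (nat \<times> nat) list \<Rightarrow> (nat list \<times> nat set) list" where
  "sub T \<alpha> = filter (\<lambda>rd. sat T \<alpha> (fst rd)) (snd T)"

definition Omega :: "nat \<Rightarrow> dtable \<Rightarrow> (nat \<times> nat) list set" where
  "Omega k T = {\<alpha>. \<forall>p \<in> set \<alpha>. fst p \<in> At T \<and> snd p < k}"

definition keep_first :: "('a \<times> 'b) list \<Rightarrow> ('a \<times> 'b) list" where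
  "keep_first xs = [xs ! i. i \<leftarrow> [0..<length xs], \<forall>j < i. fst (xs ! j) \<noteq> fst (xs ! i)]"

definition I_op :: "nat set \<Rightarrow> dtable \<Rightarrow> dtable" where
  "I_op D T = (if set (fst T) \<subseteq> D then Lambda else
     (filter (\<lambda>f. f \<notin> D) (fst T),
      keep_first (map (\<lambda>rd. ([fst rd ! i. i \<leftarrow> [0..<length (fst T)], fst T ! i \<notin> D], snd rd)) (snd T))))"

definition J_op :: "(nat list \<Rightarrow> nat set) \<Rightarrow> dtable \<Rightarrow> dtable" where
  "J_op \<nu> T = (fst T, map (\<lambda>rd. (fst rd, \<nu> (fst rd))) (snd T))"

text \<open>nu : E_k^m \<rightarrow> P(omega) (nonempty finite sets); values outside E_k^m are irrelevant.\<close>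
definition valid_nu :: "nat \<Rightarrow> nat \<Rightarrow> (nat list \<Rightarrow> nat set) \<Rightarrow> bool" where
  "valid_nu k m \<nu> \<longleftrightarrow> (\<forall>r. length r = m \<and> (\<forall>v \<in> set r. v < k) \<longrightarrow> finite (\<nu> r) \<and> \<nu> r \<noteq> {})"

definition closure_table :: "nat \<Rightarrow> dtable \<Rightarrow> dtable set" where
  "closure_table k T = {J_op \<nu> (I_op D T) | D \<nu>. D \<subseteq> At T \<and> valid_nu k (card (At T - D)) \<nu>}"

definition closure_class :: "nat \<Rightarrow> dtable set \<Rightarrow> dtable set" where
  "closure_class k A = (\<Union>T \<in> A. closure_table k T)"

definition closed_class :: "nat \<Rightarrow> dtable set \<Rightarrow> bool" where
  "closed_class k A \<longleftrightarrow> A \<noteq> {} \<and> A \<subseteq> M_inf k \<and> closure_class k A = A"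

definition nontrivial :: "dtable set \<Rightarrow> bool" where
  "nontrivial A \<longleftrightarrow> (\<exists>T \<in> A. snd T \<noteq> [])"

text \<open>A node below the root: terminal node labelled with a decision, or a node labelled
 with an attribute with a list of (edge label, child).  A k-decision tree is given by the
 (nonempty) list of children of its unlabelled root.\<close>
datatype dnode = Leaf nat | Node nat "(nat \<times> dnode) list"

type_synonym dtree = "dnode list"

fun wf_node :: "nat \<Rightarrow> dnode \<Rightarrow> bool" where
  "wf_node k (Leaf d) = True"
| "wf_node k (Node f cs) = (cs \<noteq> [] \<and> (\<forall>p \<in> set cs. fst p < k \<and> wf_node k (snd p)))"

definition ktree :: "nat \<Rightarrow> dtree \<Rightarrow> bool" where
  "ktree k \<Gamma> \<longleftrightarrow> \<Gamma> \<noteq> [] \<and> (\<forall>c \<in> set \<Gamma>. wf_node k c)"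

fun det_node :: "dnode \<Rightarrow> bool" where
  "det_node (Leaf d) = True"
| "det_node (Node f cs) = (distinct (map fst cs) \<and> (\<forall>p \<in> set cs. det_node (snd p)))"

inductive att_of :: "nat \<Rightarrow> dnode \<Rightarrow> bool" where
  "att_of f (Node f cs)"
| "p \<in> set cs \<Longrightarrow> att_of g (snd p) \<Longrightarrow> att_of g (Node f cs)"

definition At_tree :: "dtree \<Rightarrow> nat set" where
  "At_tree \<Gamma> = {f. \<exists>c \<in> set \<Gamma>. att_of f c}"

inductive npath :: "dnode \<Rightarrow> (nat \<times> nat) list \<Rightarrow> nat \<Rightarrow> bool" where
  "npath (Leaf d) [] d"
| "p \<in> set cs \<Longrightarrow> npath (snd p) \<alpha> d \<Longrightarrow> npath (Node f cs) ((f, fst p) # \<alpha>) d"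

text \<open>Complete paths tau of Gamma, given by pi(tau) and the terminal decision.\<close>
definition cpath :: "dtree \<Rightarrow> (nat \<times> nat) list \<Rightarrow> nat \<Rightarrow> bool" where
  "cpath \<Gamma> \<alpha> d \<longleftrightarrow> (\<exists>c \<in> set \<Gamma>. npath c \<alpha> d)"

definition is_ndt :: "nat \<Rightarrow> dtable \<Rightarrow> dtree \<Rightarrow> bool" where
  "is_ndt k T \<Gamma> \<longleftrightarrow> ktree k \<Gamma> \<and> At_tree \<Gamma> \<subseteq> At T \<and>
     (\<forall>rd \<in> Delta T. \<exists>\<alpha> d. cpath \<Gamma> \<alpha> d \<and> rd \<in> set (sub T \<alpha>)) \<and>
     (\<forall>\<alpha> d. cpath \<Gamma> \<alpha> d \<longrightarrow> sub T \<alpha> = [] \<or> d \<in> Pi_rows (sub T \<alpha>))"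

definition is_dt :: "nat \<Rightarrow> dtable \<Rightarrow> dtree \<Rightarrow> bool" where
  "is_dt k T \<Gamma> \<longleftrightarrow> is_ndt k T \<Gamma> \<and> length \<Gamma> = 1 \<and> (\<forall>c \<in> set \<Gamma>. det_node c)"

definition pb_measure :: "(nat list \<Rightarrow> nat) \<Rightarrow> bool" where
  "pb_measure \<psi> \<longleftrightarrow>
     (\<forall>a. \<psi> a = 0 \<longleftrightarrow> a = []) \<and>
     (\<forall>a b. mset a = mset b \<longrightarrow> \<psi> a = \<psi> b) \<and>
     (\<forall>a b. \<psi> a \<le> \<psi> (a @ b)) \<and>
     (\<forall>a b. \<psi> (a @ b) \<le> \<psi> a + \<psi> b)"

definition bounded_measure :: "(nat list \<Rightarrow> nat) \<Rightarrow> bool" where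
  "bounded_measure \<psi> \<longleftrightarrow> pb_measure \<psi> \<and> (\<forall>a. length a \<le> \<psi> a)"

definition psi_word :: "(nat list \<Rightarrow> nat) \<Rightarrow> (nat \<times> nat) list \<Rightarrow> nat" where
  "psi_word \<psi> \<alpha> = \<psi> (map fst \<alpha>)"

definition psi_tree :: "(nat list \<Rightarrow> nat) \<Rightarrow> dtree \<Rightarrow> nat" where
  "psi_tree \<psi> \<Gamma> = Max {psi_word \<psi> \<alpha> | \<alpha> d. cpath \<Gamma> \<alpha> d}"

definition psi_d :: "(nat list \<Rightarrow> nat) \<Rightarrow> nat \<Rightarrow> dtable \<Rightarrow> nat" where
  "psi_d \<psi> k T = (if snd T = [] then 0 else Inf {psi_tree \<psi> \<Gamma> | \<Gamma>. is_dt k T \<Gamma>})"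

definition psi_a :: "(nat list \<Rightarrow> nat) \<Rightarrow> nat \<Rightarrow> dtable \<Rightarrow> nat" where
  "psi_a \<psi> k T = (if snd T = [] then 0 else Inf {psi_tree \<psi> \<Gamma> | \<Gamma>. is_ndt k T \<Gamma>})"

definition is_cover :: "(nat list \<Rightarrow> nat) \<Rightarrow> nat \<Rightarrow> dtable \<Rightarrow> nat \<Rightarrow> (nat \<times> nat) list set \<Rightarrow> bool" where
  "is_cover \<psi> k T n U \<longleftrightarrow> finite U \<and> U \<subseteq> {\<alpha> \<in> Omega k T. psi_word \<psi> \<alpha> \<le> n} \<and>
     (\<Union>\<alpha> \<in> U. set (sub T \<alpha>)) = Delta T"

definition irr_cover :: "(nat list \<Rightarrow> nat) \<Rightarrow> nat \<Rightarrow> dtable \<Rightarrow> nat \<Rightarrow> (nat \<times> nat) list set \<Rightarrow> bool" where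
  "irr_cover \<psi> k T n U \<longleftrightarrow> is_cover \<psi> k T n U \<and> (\<forall>V. V \<subset> U \<longrightarrow> \<not> is_cover \<psi> k T n V)"

definition l_psi :: "(nat list \<Rightarrow> nat) \<Rightarrow> nat \<Rightarrow> dtable \<Rightarrow> nat \<Rightarrow> nat" where
  "l_psi \<psi> k T n = (if snd T = [] then 0 else Max {card U | U. irr_cover \<psi> k T n U})"

text \<open>Partial functions: None = undefined.\<close>
definition L_fun :: "(nat list \<Rightarrow> nat) \<Rightarrow> nat \<Rightarrow> dtable set \<Rightarrow> nat \<Rightarrow> nat option" where
  "L_fun \<psi> k A n = (let S = {l_psi \<psi> k T n | T. T \<in> A} in
     if finite S then Some (Max S) else None)"

definition H_fun :: "(nat list \<Rightarrow> nat) \<Rightarrow> nat \<Rightarrow> dtable set \<Rightarrow> nat \<Rightarrow> nat option" where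
  "H_fun \<psi> k A n = (let S = {psi_d \<psi> k T | T. T \<in> A \<and> psi_a \<psi> k T \<le> n} in
     if finite S then Some (Max S) else None)"

end

theory Submission
  imports Defs
begin

lemma npath_Leaf: "npath (Leaf d) \<alpha> e \<longleftrightarrow> \<alpha> = [] \<and> e = d"
  by (auto elim: npath.cases intro: npath.intros)

lemma npath_Node: "npath (Node f cs) \<alpha> e \<longleftrightarrow> (\<exists>p\<in>set cs. \<exists>\<beta>. \<alpha> = (f, fst p) # \<beta> \<and> npath (snd p) \<beta> e)"
  by (rule iffI, erule npath.cases, auto intro: npath.intros)

lemma paths_Node: "{(\<alpha>,d). npath (Node f cs) \<alpha> d} = (\<Union>p\<in>set cs. (\<lambda>(\<alpha>,d). ((f, fst p) # \<alpha>, d)) ` {(\<alpha>,d). npath (snd p) \<alpha> d})"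
  by (auto simp: npath_Node)

lemma npath_finite: "finite {(\<alpha>,d). npath c \<alpha> d}"
proof (induction c)
  case (Leaf x)
  then show ?case by (simp add: npath_Leaf)
next
  case (Node f cs)
  show ?case unfolding paths_Node
    apply (rule finite_UN_I)
     apply simp
    apply (rule finite_imageI)
    using Node by (metis prod.exhaust_sel snds.intros)
qed

lemma wf_path_exists: "wf_node k c \<Longrightarrow> \<exists>\<alpha> d. npath c \<alpha> d"
proof (induction c)
  case (Leaf x)
  then show ?case by (auto simp: npath_Leaf)
next
  case (Node f cs)
  then obtain p where p: "p \<in> set cs" by (cases cs) auto
  with Node have "\<exists>\<alpha> d. npath (snd p) \<alpha> d"
    by (metis prod.exhaust_sel snds.intros wf_node.simps(2))
  with p show ?case by (auto simp: npath_Node)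
qed

lemma npath_wf: "npath c \<alpha> d \<Longrightarrow> wf_node k c \<Longrightarrow> \<forall>p\<in>set \<alpha>. att_of (fst p) c \<and> snd p < k"
proof (induction rule: npath.induct)
  case (1 d)
  then show ?case by simp
next
  case (2 p cs \<alpha> d f)
  then show ?case by (auto intro: att_of.intros)
qed

lemma npath_card:
  "k > 0 \<Longrightarrow> wf_node k c \<Longrightarrow> det_node c \<Longrightarrow> (\<forall>\<alpha> d. npath c \<alpha> d \<longrightarrow> length \<alpha> \<le> h)
   \<Longrightarrow> card {(\<alpha>,d). npath c \<alpha> d} \<le> k ^ h"
proof (induction c arbitrary: h)
  case (Leaf x)
  have "{(\<alpha>,d). npath (Leaf x) \<alpha> d} = {([], x)}" by (auto simp: npath_Leaf)
  then show ?case using Leaf by simp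
next
  case (Node f cs)
  show ?case
  proof (cases h)
    case 0
    have "{(\<alpha>,d). npath (Node f cs) \<alpha> d} = {}"
      using Node.prems(4) 0 by (auto simp: npath_Node)
    then show ?thesis by simp
  next
    case (Suc h')
    have ch: "card {(\<alpha>,d). npath (snd p) \<alpha> d} \<le> k ^ h'" if p: "p \<in> set cs" for p
    proof -
      have "wf_node k (snd p)" "det_node (snd p)" using Node.prems p by auto
      moreover have "\<forall>\<alpha> d. npath (snd p) \<alpha> d \<longrightarrow> length \<alpha> \<le> h'"
        using Node.prems(4) p Suc by (fastforce simp: npath_Node)
      ultimately show ?thesis using Node.IH[of p "snd p" h'] p Node.prems(1)
        by (metis prod.exhaust_sel snds.intros)
    qed
    have "card {(\<alpha>,d). npath (Node f cs) \<alpha> d} \<le> (\<Sum>p\<in>set cs. card ((\<lambda>(\<alpha>,d). ((f, fst p) # \<alpha>, d)) ` {(\<alpha>,d). npath (snd p) \<alpha> d}))"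
      unfolding paths_Node by (rule card_UN_le) simp
    also have "\<dots> \<le> (\<Sum>p\<in>set cs. k ^ h')"
      by (rule sum_mono) (meson card_image_le ch npath_finite order_trans)
    also have "\<dots> = card (set cs) * k ^ h'" by simp
    also have "card (set cs) \<le> k"
    proof -
      have "distinct (map fst cs)" using Node.prems by simp
      then have "card (set cs) = card (fst ` set cs)"
        by (simp add: card_image distinct_map)
      also have "\<dots> \<le> card {..<k}"
        by (rule card_mono) (use Node.prems in auto)
      finally show ?thesis by simp
    qed
    then have "card (set cs) * k ^ h' \<le> k * k ^ h'" by simp
    finally show ?thesis using Suc by simp
  qed
qed

lemma cpath_finite: "finite {(\<alpha>,d). cpath \<Gamma> \<alpha> d}"
proof -
  have "{(\<alpha>,d). cpath \<Gamma> \<alpha> d} = (\<Union>c\<in>set \<Gamma>. {(\<alpha>,d). npath c \<alpha> d})"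
    by (auto simp: cpath_def)
  then show ?thesis using npath_finite by simp
qed

lemma psi_set_eq: "{psi_word \<psi> \<alpha> | \<alpha> d. cpath \<Gamma> \<alpha> d} = (\<lambda>(\<alpha>,d). psi_word \<psi> \<alpha>) ` {(\<alpha>,d). cpath \<Gamma> \<alpha> d}"
  by auto

lemma psi_tree_ge: "cpath \<Gamma> \<alpha> d \<Longrightarrow> psi_word \<psi> \<alpha> \<le> psi_tree \<psi> \<Gamma>"
  unfolding psi_tree_def psi_set_eq
  by (rule Max_ge) (use cpath_finite in auto)

lemma psi_tree_le:
  assumes "ktree k \<Gamma>" "\<And>\<alpha> d. cpath \<Gamma> \<alpha> d \<Longrightarrow> psi_word \<psi> \<alpha> \<le> b"
  shows "psi_tree \<psi> \<Gamma> \<le> b"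
proof -
  obtain c where c: "c \<in> set \<Gamma>" "wf_node k c" using assms(1) unfolding ktree_def
    by (cases \<Gamma>) auto
  then obtain \<alpha> d where "npath c \<alpha> d" using wf_path_exists by blast
  then have ne: "{(\<alpha>,d). cpath \<Gamma> \<alpha> d} \<noteq> {}" using c by (auto simp: cpath_def)
  show ?thesis unfolding psi_tree_def psi_set_eq
    by (subst Max_le_iff) (use cpath_finite ne assms(2) in auto)
qed

fun bld :: "nat \<Rightarrow> ((nat\<times>nat) list \<Rightarrow> nat) \<Rightarrow> nat list \<Rightarrow> (nat\<times>nat) list \<Rightarrow> dnode" where
  "bld k g [] acc = Leaf (g acc)"
| "bld k g (f#fs) acc = Node f (map (\<lambda>v. (v, bld k g fs (acc @ [(f,v)]))) [0..<k])"

lemma npath_bld: "npath (bld k g B acc) \<beta> d \<longleftrightarrow>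
   (\<exists>vs. length vs = length B \<and> (\<forall>v\<in>set vs. v < k) \<and> \<beta> = zip B vs \<and> d = g (acc @ zip B vs))"
proof (induction B arbitrary: acc \<beta>)
  case Nil
  then show ?case by (auto simp: npath_Leaf)
next
  case (Cons f fs)
  show ?case
  proof
    assume "npath (bld k g (f # fs) acc) \<beta> d"
    then obtain v \<beta>' where v: "v < k" "\<beta> = (f,v) # \<beta>'" "npath (bld k g fs (acc @ [(f,v)])) \<beta>' d"
      by (auto simp: npath_Node)
    then obtain vs where "length vs = length fs" "\<forall>v\<in>set vs. v < k" "\<beta>' = zip fs vs"
       "d = g ((acc @ [(f,v)]) @ zip fs vs)" using Cons.IH by blast
    then show "\<exists>vs. length vs = length (f#fs) \<and> (\<forall>v\<in>set vs. v < k) \<and> \<beta> = zip (f#fs) vs \<and> d = g (acc @ zip (f#fs) vs)"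
      using v by (intro exI[of _ "v#vs"]) auto
  next
    assume "\<exists>vs. length vs = length (f#fs) \<and> (\<forall>v\<in>set vs. v < k) \<and> \<beta> = zip (f#fs) vs \<and> d = g (acc @ zip (f#fs) vs)"
    then obtain vs0 where vs0: "length vs0 = length (f#fs)" "\<forall>v\<in>set vs0. v < k" "\<beta> = zip (f#fs) vs0" "d = g (acc @ zip (f#fs) vs0)"
      by blast
    then obtain v vs where "vs0 = v # vs" by (cases vs0) auto
    then have vs: "length vs = length fs" "\<forall>v\<in>set vs. v < k" "v < k" "\<beta> = (f,v) # zip fs vs"
       "d = g ((acc @ [(f,v)]) @ zip fs vs)" using vs0 by auto
    then have "npath (bld k g fs (acc @ [(f,v)])) (zip fs vs) d" using Cons.IH by blast
    then show "npath (bld k g (f # fs) acc) \<beta> d" using vs by (auto simp: npath_Node)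
  qed
qed

lemma wf_bld: "k > 0 \<Longrightarrow> wf_node k (bld k g B acc)"
  by (induction B arbitrary: acc) auto

lemma det_bld: "det_node (bld k g B acc)"
  by (induction B arbitrary: acc) (auto simp: comp_def)

lemma att_bld: "att_of f (bld k g B acc) \<Longrightarrow> f \<in> set B"
proof (induction B arbitrary: acc)
  case Nil
  then show ?case by (auto elim: att_of.cases)
next
  case (Cons a B)
  from Cons.prems show ?case
    by (cases rule: att_of.cases) (auto dest: Cons.IH)
qed

fun chain :: "(nat\<times>nat) list \<Rightarrow> nat \<Rightarrow> dnode" where
  "chain [] d = Leaf d"
| "chain (p#\<alpha>) d = Node (fst p) [(snd p, chain \<alpha> d)]"

lemma npath_chain: "npath (chain \<alpha> d) \<beta> e \<longleftrightarrow> \<beta> = \<alpha> \<and> e = d"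
  by (induction \<alpha> arbitrary: \<beta>) (auto simp: npath_Leaf npath_Node)

lemma wf_chain: "\<forall>p\<in>set \<alpha>. snd p < k \<Longrightarrow> wf_node k (chain \<alpha> d)"
  by (induction \<alpha>) auto

lemma att_chain: "att_of f (chain \<alpha> d) \<Longrightarrow> f \<in> fst ` set \<alpha>"
proof (induction \<alpha>)
  case Nil
  then show ?case by (auto elim: att_of.cases)
next
  case (Cons a \<alpha>)
  from Cons.prems show ?case
    by (cases rule: att_of.cases) (auto dest: Cons.IH)
qed

lemma psi_concat_le:
  assumes "pb_measure \<psi>"
  shows "\<psi> (concat (map (map fst) ws)) \<le> (\<Sum>w\<leftarrow>ws. psi_word \<psi> w)"
proof (induction ws)
  case Nil
  have "\<psi> [] = 0" using assms unfolding pb_measure_def by blast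
  then show ?case by simp
next
  case (Cons w ws)
  have "\<psi> (map fst w @ concat (map (map fst) ws)) \<le> \<psi> (map fst w) + \<psi> (concat (map (map fst) ws))"
    using assms unfolding pb_measure_def by blast
  then show ?case using Cons by (simp add: psi_word_def)
qed

lemma psi_remdups_le:
  assumes "pb_measure \<psi>"
  shows "\<psi> (remdups C) \<le> \<psi> C"
proof -
  have "mset (remdups C) \<subseteq># mset C" by (rule mset_remdups_subset_eq)
  then obtain M where M: "mset C = mset (remdups C) + M" by (metis subset_mset.add_diff_inverse)
  obtain D where D: "mset D = M" using ex_mset by blast
  have "\<psi> (remdups C) \<le> \<psi> (remdups C @ D)" using assms unfolding pb_measure_def by blast
  also have "\<psi> (remdups C @ D) = \<psi> C" using assms M D unfolding pb_measure_def by simp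
  finally show ?thesis .
qed

lemma set_zip_map: "set (zip B (map h B)) = (\<lambda>f. (f, h f)) ` set B"
  by (induction B) auto

lemma dt_exists:
  assumes k: "k \<ge> 1" and dist: "distinct (fst T)"
    and rows: "\<forall>rd\<in>set (snd T). length (fst rd) = length (fst T) \<and> (\<forall>v\<in>set (fst rd). v < k)"
    and ws: "set ws \<subseteq> Omega k T"
    and cov: "\<forall>rd\<in>set (snd T). \<exists>w\<in>set ws. rd \<in> set (sub T w)"
    and dec: "\<forall>w\<in>set ws. \<forall>rd\<in>set (sub T w). dec w \<in> snd rd"
    and psi: "pb_measure \<psi>"
  shows "\<exists>\<Gamma>. is_dt k T \<Gamma> \<and> psi_tree \<psi> \<Gamma> \<le> (\<Sum>w\<leftarrow>ws. psi_word \<psi> w)"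
proof -
  define C where "C = concat (map (map fst) ws)"
  define B where "B = remdups C"
  define g where "g acc = (case find (\<lambda>w. set w \<subseteq> set acc) ws of Some w \<Rightarrow> dec w | None \<Rightarrow> 0)" for acc
  define \<Gamma> where "\<Gamma> = [bld k g B []]"
  have cp: "cpath \<Gamma> \<beta> d \<longleftrightarrow> (\<exists>vs. length vs = length B \<and> (\<forall>v\<in>set vs. v < k) \<and> \<beta> = zip B vs \<and> d = g (zip B vs))"
    for \<beta> d unfolding \<Gamma>_def cpath_def by (simp add: npath_bld)
  have kt: "ktree k \<Gamma>" using k wf_bld unfolding \<Gamma>_def ktree_def by auto
  have setB: "set B \<subseteq> At T"
    using ws unfolding B_def C_def Omega_def by auto
  have at: "At_tree \<Gamma> \<subseteq> At T"
    using setB att_bld unfolding \<Gamma>_def At_tree_def by auto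
  have covr: "\<exists>\<alpha> d. cpath \<Gamma> \<alpha> d \<and> rd \<in> set (sub T \<alpha>)" if rd: "rd \<in> Delta T" for rd
  proof -
    define ix where "ix f = (SOME i. i < length (fst T) \<and> fst T ! i = f)" for f
    have ix: "ix f < length (fst T) \<and> fst T ! ix f = f" if "f \<in> set B" for f
    proof -
      have "f \<in> set (fst T)" using that setB by (auto simp: At_def)
      then have "\<exists>i. i < length (fst T) \<and> fst T ! i = f" by (simp add: in_set_conv_nth)
      then show ?thesis unfolding ix_def by (rule someI_ex)
    qed
    define vs where "vs = map (\<lambda>f. fst rd ! ix f) B"
    have rdT: "rd \<in> set (snd T)" using rd by (simp add: Delta_def)
    have "\<forall>v\<in>set vs. v < k"
    proof
      fix v assume "v \<in> set vs"
      then obtain f where f: "f \<in> set B" "v = fst rd ! ix f" by (auto simp: vs_def)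
      then have "v \<in> set (fst rd)" using ix[OF f(1)] rows rdT by auto
      then show "v < k" using rows rdT by auto
    qed
    then have "cpath \<Gamma> (zip B vs) (g (zip B vs))" unfolding cp
      by (intro exI[of _ vs]) (simp add: vs_def)
    moreover have "sat T (zip B vs) (fst rd)"
      unfolding sat_def vs_def set_zip_map using ix by force
    ultimately show ?thesis using rdT by (auto simp: sub_def)
  qed
  have corr: "d \<in> Pi_rows (sub T \<alpha>)" if c: "cpath \<Gamma> \<alpha> d" and ne: "sub T \<alpha> \<noteq> []" for \<alpha> d
  proof -
    obtain vs where vs: "length vs = length B" "\<alpha> = zip B vs" "d = g (zip B vs)"
      using c cp by blast
    obtain rd0 where rd0: "rd0 \<in> set (sub T \<alpha>)" using ne by (cases "sub T \<alpha>") auto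
    then have rd0T: "rd0 \<in> set (snd T)" and s0: "sat T \<alpha> (fst rd0)" by (auto simp: sub_def)
    obtain w where w: "w \<in> set ws" "rd0 \<in> set (sub T w)" using cov rd0T by blast
    have "set w \<subseteq> set \<alpha>"
    proof
      fix p assume p: "p \<in> set w"
      obtain f v where pfv: "p = (f,v)" by fastforce
      have "sat T w (fst rd0)" using w by (simp add: sub_def)
      then obtain i where i: "i < length (fst T)" "fst T ! i = f" "fst rd0 ! i = v"
        using p pfv unfolding sat_def by force
      have "f \<in> set B" using w p pfv unfolding B_def C_def by force
      then obtain j where j: "j < length B" "B ! j = f" by (auto simp: in_set_conv_nth)
      have "(B ! j, vs ! j) \<in> set \<alpha>" using j vs by (auto simp: in_set_conv_nth)
      then obtain i' where i': "i' < length (fst T)" "fst T ! i' = f" "fst rd0 ! i' = vs ! j"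
        using s0 j unfolding sat_def by force
      have "i = i'" using i i' dist nth_eq_iff_index_eq by metis
      then have "p = (B ! j, vs ! j)" using i i' j pfv by simp
      then show "p \<in> set \<alpha>" using \<open>(B ! j, vs ! j) \<in> set \<alpha>\<close> by simp
    qed
    then have "find (\<lambda>w. set w \<subseteq> set \<alpha>) ws \<noteq> None" using w(1) by (simp add: find_None_iff) blast
    then obtain w' where w': "find (\<lambda>w. set w \<subseteq> set \<alpha>) ws = Some w'" by blast
    then have w'1: "w' \<in> set ws" "set w' \<subseteq> set \<alpha>" by (auto simp: find_Some_iff in_set_conv_nth)
    have dd: "d = dec w'" using vs w' by (simp add: g_def)
    show ?thesis unfolding Pi_rows_def
    proof
      fix rd assume "rd \<in> set (sub T \<alpha>)"
      then have "rd \<in> set (snd T)" "sat T \<alpha> (fst rd)" by (auto simp: sub_def)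
      then have "rd \<in> set (sub T w')" using w'1 unfolding sub_def sat_def by auto
      then show "d \<in> snd rd" using dec w'1 dd by blast
    qed
  qed
  have ndt: "is_ndt k T \<Gamma>" unfolding is_ndt_def using kt at covr corr by blast
  have dt: "is_dt k T \<Gamma>" unfolding is_dt_def using ndt det_bld by (simp add: \<Gamma>_def)
  have "psi_tree \<psi> \<Gamma> \<le> \<psi> C"
  proof (rule psi_tree_le[OF kt])
    fix \<alpha> d assume "cpath \<Gamma> \<alpha> d"
    then obtain vs where "length vs = length B" "\<alpha> = zip B vs" using cp by blast
    then have "map fst \<alpha> = B" by simp
    then show "psi_word \<psi> \<alpha> \<le> \<psi> C" using psi_remdups_le[OF psi] by (simp add: psi_word_def B_def)
  qed
  also have "\<psi> C \<le> (\<Sum>w\<leftarrow>ws. psi_word \<psi> w)" unfolding C_def by (rule psi_concat_le[OF psi])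
  finally show ?thesis using dt by blast
qed

lemma dt_some:
  assumes k: "k \<ge> 1" and wf: "wf_table k T" and psi: "pb_measure \<psi>"
  shows "\<exists>\<Gamma>. is_dt k T \<Gamma>"
proof -
  define ws where "ws = map (\<lambda>rd. zip (fst T) (fst rd)) (snd T)"
  define dec where "dec w = (SOME d. \<forall>rd \<in> set (sub T w). d \<in> snd rd)" for w
  have dist: "distinct (fst T)" and dk: "distinct (map fst (snd T))"
    and rows: "\<forall>rd\<in>set (snd T). length (fst rd) = length (fst T) \<and> (\<forall>v\<in>set (fst rd). v < k)
        \<and> finite (snd rd) \<and> snd rd \<noteq> {}"
    using wf unfolding wf_table_def by auto
  have sat_self: "rd \<in> set (sub T (zip (fst T) (fst rd)))" if "rd \<in> set (snd T)" for rd
    using that unfolding sub_def sat_def by (auto simp: in_set_conv_nth) blast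
  have only: "rd = rd0" if "rd0 \<in> set (snd T)" "rd \<in> set (sub T (zip (fst T) (fst rd0)))" for rd rd0
  proof -
    have rd: "rd \<in> set (snd T)" "sat T (zip (fst T) (fst rd0)) (fst rd)" using that by (auto simp: sub_def)
    have len: "length (fst rd) = length (fst T)" "length (fst rd0) = length (fst T)" using rows rd that by auto
    have "fst rd ! i = fst rd0 ! i" if i: "i < length (fst T)" for i
    proof -
      have "(fst T ! i, fst rd0 ! i) \<in> set (zip (fst T) (fst rd0))" using i len by (auto simp: in_set_conv_nth)
      then obtain i' where "i' < length (fst T)" "fst T ! i' = fst T ! i" "fst rd ! i' = fst rd0 ! i"
        using rd(2) unfolding sat_def by force
      then show ?thesis using i dist nth_eq_iff_index_eq by metis
    qed
    then have "fst rd = fst rd0" using len by (simp add: nth_equalityI)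
    then show ?thesis using dk rd(1) that(1) by (metis eq_key_imp_eq_value prod.exhaust_sel)
  qed
  have "\<exists>\<Gamma>. is_dt k T \<Gamma> \<and> psi_tree \<psi> \<Gamma> \<le> (\<Sum>w\<leftarrow>ws. psi_word \<psi> w)"
  proof (rule dt_exists[OF k dist _ _ _ _ psi])
    show "\<forall>rd\<in>set (snd T). length (fst rd) = length (fst T) \<and> (\<forall>v\<in>set (fst rd). v < k)"
      using rows by blast
    show "set ws \<subseteq> Omega k T"
      using rows unfolding ws_def Omega_def At_def by (force simp: in_set_conv_nth)
    show "\<forall>rd\<in>set (snd T). \<exists>w\<in>set ws. rd \<in> set (sub T w)"
      using sat_self unfolding ws_def by auto
    show "\<forall>w\<in>set ws. \<forall>rd\<in>set (sub T w). dec w \<in> snd rd"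
    proof (intro ballI)
      fix w rd assume w: "w \<in> set ws" and rd: "rd \<in> set (sub T w)"
      obtain rd0 where rd0: "rd0 \<in> set (snd T)" "w = zip (fst T) (fst rd0)" using w by (auto simp: ws_def)
      obtain d where "d \<in> snd rd0" using rows rd0 by blast
      then have "\<forall>rd \<in> set (sub T w). d \<in> snd rd" using only rd0 by blast
      then have "\<forall>rd \<in> set (sub T w). dec w \<in> snd rd" unfolding dec_def by (rule someI)
      then show "dec w \<in> snd rd" using rd by blast
    qed
  qed
  then show ?thesis by blast
qed

lemma omega_n_finite:
  assumes "bounded_measure \<psi>"
  shows "finite {\<alpha> \<in> Omega k T. psi_word \<psi> \<alpha> \<le> n}"
proof -
  have "{\<alpha> \<in> Omega k T. psi_word \<psi> \<alpha> \<le> n} \<subseteq> {xs. set xs \<subseteq> At T \<times> {..<k} \<and> length xs \<le> n}"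
  proof
    fix \<alpha> assume a: "\<alpha> \<in> {\<alpha> \<in> Omega k T. psi_word \<psi> \<alpha> \<le> n}"
    have "length (map fst \<alpha>) \<le> \<psi> (map fst \<alpha>)" using assms unfolding bounded_measure_def by blast
    then have "length \<alpha> \<le> n" using a by (simp add: psi_word_def)
    moreover have "set \<alpha> \<subseteq> At T \<times> {..<k}" using a unfolding Omega_def by force
    ultimately show "\<alpha> \<in> {xs. set xs \<subseteq> At T \<times> {..<k} \<and> length xs \<le> n}" by simp
  qed
  moreover have "finite (At T \<times> {..<k})" by (simp add: At_def)
  ultimately show ?thesis using finite_lists_length_le finite_subset by blast
qed

lemma irr_exists:
  assumes "is_cover \<psi> k T n U"
  shows "\<exists>V\<subseteq>U. irr_cover \<psi> k T n V"
proof -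
  obtain V where V: "V \<subseteq> U \<and> is_cover \<psi> k T n V" and m: "\<forall>W. W \<subseteq> U \<and> is_cover \<psi> k T n W \<longrightarrow> card V \<le> card W"
    using ex_has_least_nat[of "\<lambda>V. V \<subseteq> U \<and> is_cover \<psi> k T n V" U card] assms by blast
  have "irr_cover \<psi> k T n V"
    unfolding irr_cover_def
  proof (intro conjI allI impI)
    show "is_cover \<psi> k T n V" using V by blast
    fix W assume W: "W \<subset> V"
    show "\<not> is_cover \<psi> k T n W"
    proof
      assume c: "is_cover \<psi> k T n W"
      have "finite V" using V by (simp add: is_cover_def)
      then have "card W < card V" using W psubset_card_mono by blast
      moreover have "card V \<le> card W" using m c W V by blast
      ultimately show False by simp
    qed
  qed
  then show ?thesis using V by blast
qed

lemma lpsi_facts: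
  assumes b: "bounded_measure \<psi>" and ne: "snd T \<noteq> []"
  shows "\<And>V. irr_cover \<psi> k T n V \<Longrightarrow> card V \<le> l_psi \<psi> k T n"
    and "\<exists>U. irr_cover \<psi> k T n U \<and> card U = l_psi \<psi> k T n"
proof -
  let ?C = "{card U | U. irr_cover \<psi> k T n U}"
  have "{U. irr_cover \<psi> k T n U} \<subseteq> Pow {\<alpha> \<in> Omega k T. psi_word \<psi> \<alpha> \<le> n}"
    unfolding irr_cover_def is_cover_def by auto
  then have "finite {U. irr_cover \<psi> k T n U}" using omega_n_finite[OF b] finite_subset by blast
  then have fin: "finite ?C" by (simp add: setcompr_eq_image)
  have p0: "pb_measure \<psi>" using b by (simp add: bounded_measure_def)
  have "\<psi> [] = 0" using p0 unfolding pb_measure_def by blast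
  then have "is_cover \<psi> k T n {[]}"
    unfolding is_cover_def Omega_def psi_word_def Delta_def sub_def sat_def by simp
  then obtain V where "irr_cover \<psi> k T n V" using irr_exists by blast
  then have cne: "?C \<noteq> {}" by blast
  show "card V \<le> l_psi \<psi> k T n" if "irr_cover \<psi> k T n V" for V
    using that fin ne unfolding l_psi_def by (auto intro: Max_ge)
  have "Max ?C \<in> ?C" using fin cne by (rule Max_in)
  then show "\<exists>U. irr_cover \<psi> k T n U \<and> card U = l_psi \<psi> k T n"
    using ne unfolding l_psi_def by auto
qed

lemma ub:
  assumes k: "k \<ge> 2" and wf: "wf_table k T" and b: "bounded_measure \<psi>"
    and a: "psi_a \<psi> k T \<le> n" and lt: "l_psi \<psi> k T n \<le> l"
  shows "psi_d \<psi> k T \<le> l * n"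
proof (cases "snd T = []")
  case True
  then show ?thesis by (simp add: psi_d_def)
next
  case ne: False
  have p0: "pb_measure \<psi>" using b by (simp add: bounded_measure_def)
  have k1: "k \<ge> 1" using k by simp
  obtain \<Gamma>0 where "is_dt k T \<Gamma>0" using dt_some[OF k1 wf p0] by blast
  then have "is_ndt k T \<Gamma>0" by (simp add: is_dt_def)
  then have "{psi_tree \<psi> \<Gamma> | \<Gamma>. is_ndt k T \<Gamma>} \<noteq> {}" by blast
  then have "Inf {psi_tree \<psi> \<Gamma> | \<Gamma>. is_ndt k T \<Gamma>} \<in> {psi_tree \<psi> \<Gamma> | \<Gamma>. is_ndt k T \<Gamma>}"
    by (rule Inf_nat_def1)
  then obtain \<Gamma> where G: "is_ndt k T \<Gamma>" "psi_tree \<psi> \<Gamma> \<le> n"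
    using a ne unfolding psi_a_def by auto
  define U where "U = {\<alpha>. (\<exists>d. cpath \<Gamma> \<alpha> d) \<and> sub T \<alpha> \<noteq> []}"
  have Gk: "ktree k \<Gamma>" and Gat: "At_tree \<Gamma> \<subseteq> At T"
    and Gcov: "\<forall>rd \<in> Delta T. \<exists>\<alpha> d. cpath \<Gamma> \<alpha> d \<and> rd \<in> set (sub T \<alpha>)"
    and Gcor: "\<forall>\<alpha> d. cpath \<Gamma> \<alpha> d \<longrightarrow> sub T \<alpha> = [] \<or> d \<in> Pi_rows (sub T \<alpha>)"
    using G(1) unfolding is_ndt_def by auto
  have "is_cover \<psi> k T n U"
    unfolding is_cover_def
  proof (intro conjI)
    have "U \<subseteq> fst ` {(\<alpha>,d). cpath \<Gamma> \<alpha> d}"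
    proof
      fix \<alpha> assume "\<alpha> \<in> U"
      then obtain d where "cpath \<Gamma> \<alpha> d" unfolding U_def by blast
      then have "(\<alpha>,d) \<in> {(\<alpha>,d). cpath \<Gamma> \<alpha> d}" by simp
      then show "\<alpha> \<in> fst ` {(\<alpha>,d). cpath \<Gamma> \<alpha> d}" by (rule rev_image_eqI) simp
    qed
    then show "finite U" by (rule finite_surj[OF cpath_finite[of \<Gamma>]])
    show "U \<subseteq> {\<alpha> \<in> Omega k T. psi_word \<psi> \<alpha> \<le> n}"
    proof
      fix \<alpha> assume "\<alpha> \<in> U"
      then obtain d where cp: "cpath \<Gamma> \<alpha> d" unfolding U_def by blast
      then obtain c where c: "c \<in> set \<Gamma>" "npath c \<alpha> d" unfolding cpath_def by blast
      have "wf_node k c" using Gk c(1) by (simp add: ktree_def)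
      then have "\<forall>p\<in>set \<alpha>. att_of (fst p) c \<and> snd p < k" using npath_wf c(2) by blast
      then have "\<alpha> \<in> Omega k T" using Gat c(1) unfolding Omega_def At_tree_def by blast
      moreover have "psi_word \<psi> \<alpha> \<le> n" using psi_tree_ge[OF cp] G(2) by (rule order_trans)
      ultimately show "\<alpha> \<in> {\<alpha> \<in> Omega k T. psi_word \<psi> \<alpha> \<le> n}" by simp
    qed
    show "(\<Union>\<alpha> \<in> U. set (sub T \<alpha>)) = Delta T"
    proof
      show "(\<Union>\<alpha> \<in> U. set (sub T \<alpha>)) \<subseteq> Delta T" by (auto simp: sub_def Delta_def)
      show "Delta T \<subseteq> (\<Union>\<alpha> \<in> U. set (sub T \<alpha>))"
      proof
        fix rd assume "rd \<in> Delta T"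
        then obtain \<alpha> d where "cpath \<Gamma> \<alpha> d" "rd \<in> set (sub T \<alpha>)" using Gcov by blast
        then show "rd \<in> (\<Union>\<alpha> \<in> U. set (sub T \<alpha>))" unfolding U_def by auto
      qed
    qed
  qed
  then obtain V where V: "V \<subseteq> U" "irr_cover \<psi> k T n V" using irr_exists[of \<psi> k T n U] by blast
  have cV: "card V \<le> l" using lpsi_facts(1)[OF b ne V(2)] lt by simp
  have Vc: "is_cover \<psi> k T n V" using V(2) by (simp add: irr_cover_def)
  then have "finite V" by (simp add: is_cover_def)
  then obtain ws where ws: "set ws = V" "distinct ws" using finite_distinct_list by blast
  define dec where "dec w = (SOME d. cpath \<Gamma> w d \<and> d \<in> Pi_rows (sub T w))" for w
  have dist: "distinct (fst T)"
    and rows: "\<forall>rd\<in>set (snd T). length (fst rd) = length (fst T) \<and> (\<forall>v\<in>set (fst rd). v < k)"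
    using wf unfolding wf_table_def by auto
  have "\<exists>\<Gamma>. is_dt k T \<Gamma> \<and> psi_tree \<psi> \<Gamma> \<le> (\<Sum>w\<leftarrow>ws. psi_word \<psi> w)"
  proof (rule dt_exists[OF k1 dist rows _ _ _ p0])
    show "set ws \<subseteq> Omega k T" using Vc ws unfolding is_cover_def by auto
    show "\<forall>rd\<in>set (snd T). \<exists>w\<in>set ws. rd \<in> set (sub T w)"
    proof
      fix rd assume "rd \<in> set (snd T)"
      then have "rd \<in> (\<Union>\<alpha> \<in> V. set (sub T \<alpha>))" using Vc unfolding is_cover_def Delta_def by simp
      then show "\<exists>w\<in>set ws. rd \<in> set (sub T w)" using ws by blast
    qed
    show "\<forall>w\<in>set ws. \<forall>rd\<in>set (sub T w). dec w \<in> snd rd"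
    proof (intro ballI)
      fix w rd assume w: "w \<in> set ws" and rd: "rd \<in> set (sub T w)"
      then have "w \<in> U" using ws V by blast
      then obtain d where "cpath \<Gamma> w d" "sub T w \<noteq> []" unfolding U_def by blast
      then have "cpath \<Gamma> w d \<and> d \<in> Pi_rows (sub T w)" using Gcor by blast
      then have "cpath \<Gamma> w (dec w) \<and> dec w \<in> Pi_rows (sub T w)" unfolding dec_def by (rule someI)
      then show "dec w \<in> snd rd" using rd by (auto simp: Pi_rows_def)
    qed
  qed
  then obtain \<Gamma>' where G': "is_dt k T \<Gamma>'" "psi_tree \<psi> \<Gamma>' \<le> (\<Sum>w\<leftarrow>ws. psi_word \<psi> w)" by blast
  have "(\<Sum>w\<leftarrow>ws. psi_word \<psi> w) \<le> (\<Sum>w\<leftarrow>ws. n)"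
    by (rule sum_list_mono) (use Vc ws in \<open>auto simp: is_cover_def\<close>)
  also have "\<dots> = card V * n" using ws distinct_card[OF ws(2)] by (simp add: sum_list_triv)
  also have "\<dots> \<le> l * n" using cV by simp
  finally have "psi_tree \<psi> \<Gamma>' \<le> l * n" using G'(2) by simp
  moreover have "psi_d \<psi> k T \<le> psi_tree \<psi> \<Gamma>'"
  proof -
    have "psi_tree \<psi> \<Gamma>' \<in> {psi_tree \<psi> \<Gamma> | \<Gamma>. is_dt k T \<Gamma>}" using G'(1) by blast
    then show ?thesis unfolding psi_d_def using ne by (simp add: wellorder_Inf_le1)
  qed
  ultimately show ?thesis by simp
qed

lemma sat_J: "sat (J_op \<nu> T) = sat T"
  by (auto simp: sat_def J_op_def fun_eq_iff)

lemma sub_J0: "sub (J_op \<nu> T) \<alpha> = map (\<lambda>rd. (fst rd, \<nu> (fst rd))) (sub T \<alpha>)"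
  unfolding sub_def sat_J by (simp add: J_op_def filter_map comp_def)

lemma sub_J: "set (sub (J_op \<nu> T) \<alpha>) = (\<lambda>rd. (fst rd, \<nu> (fst rd))) ` set (sub T \<alpha>)"
  by (simp add: sub_J0)

lemma Delta_J: "Delta (J_op \<nu> T) = (\<lambda>rd. (fst rd, \<nu> (fst rd))) ` Delta T"
  by (auto simp: Delta_def J_op_def)

lemma At_J: "At (J_op \<nu> T) = At T"
  by (simp add: At_def J_op_def)

lemma Omega_J: "Omega k (J_op \<nu> T) = Omega k T"
  by (simp add: Omega_def At_J)

lemma wf_J:
  assumes "wf_table k T" "\<forall>r. finite (\<nu> r) \<and> \<nu> r \<noteq> {}"
  shows "wf_table k (J_op \<nu> T)"
  using assms unfolding wf_table_def J_op_def by (auto simp: comp_def)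

lemma lb:
  assumes k: "k \<ge> 2" and wf: "wf_table k T" and ne: "snd T \<noteq> []" and b: "bounded_measure \<psi>"
    and U: "irr_cover \<psi> k T n U" and cU: "card U = l" and l0: "l > 0"
  shows "\<exists>\<nu>. valid_nu k (card (At T)) \<nu> \<and> psi_a \<psi> k (J_op \<nu> T) \<le> n
          \<and> log (real k) (real l) \<le> real (psi_d \<psi> k (J_op \<nu> T))"
proof -
  have p0: "pb_measure \<psi>" using b by (simp add: bounded_measure_def)
  have k1: "k \<ge> 1" using k by simp
  have Uc: "is_cover \<psi> k T n U" using U by (simp add: irr_cover_def)
  have Uirr: "\<And>V. V \<subset> U \<Longrightarrow> \<not> is_cover \<psi> k T n V" using U by (simp add: irr_cover_def)
  have finU: "finite U" using Uc by (simp add: is_cover_def)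
  have Usub: "U \<subseteq> {\<alpha> \<in> Omega k T. psi_word \<psi> \<alpha> \<le> n}" using Uc by (simp add: is_cover_def)
  have Ucov: "(\<Union>\<alpha> \<in> U. set (sub T \<alpha>)) = Delta T" using Uc by (simp add: is_cover_def)
  obtain us where us: "set us = U" "distinct us" using finite_distinct_list[OF finU] by blast
  have lus: "length us = l" using us cU distinct_card by metis
  define \<nu> where "\<nu> r = (if \<exists>j<l. sat T (us!j) r then {j. j<l \<and> sat T (us!j) r} else {0})" for r
  have \<nu>ok: "\<forall>r. finite (\<nu> r) \<and> \<nu> r \<noteq> {}" unfolding \<nu>_def by auto
  have \<nu>j: "j \<in> \<nu> r" if "j < l" "sat T (us!j) r" for j r
    using that unfolding \<nu>_def by auto
  define T' where "T' = J_op \<nu> T"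
  have vnu: "valid_nu k (card (At T)) \<nu>" using \<nu>ok by (simp add: valid_nu_def)
  have ne': "snd T' \<noteq> []" using ne by (simp add: T'_def J_op_def)
  have wf': "wf_table k T'" unfolding T'_def by (rule wf_J[OF wf \<nu>ok])
  have usU: "us ! j \<in> U" if "j < l" for j using that us lus by auto
  define \<Gamma>n where "\<Gamma>n = map (\<lambda>j. chain (us!j) j) [0..<l]"
  have cpn: "cpath \<Gamma>n \<alpha> d \<longleftrightarrow> (\<exists>j<l. \<alpha> = us!j \<and> d = j)" for \<alpha> d
    unfolding cpath_def \<Gamma>n_def by (auto simp: npath_chain)
  have ktn: "ktree k \<Gamma>n" unfolding ktree_def
  proof
    show "\<Gamma>n \<noteq> []" using l0 by (simp add: \<Gamma>n_def)
    show "\<forall>c\<in>set \<Gamma>n. wf_node k c"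
    proof
      fix c assume "c \<in> set \<Gamma>n"
      then obtain j where j: "j < l" "c = chain (us!j) j" by (auto simp: \<Gamma>n_def)
      have "us ! j \<in> Omega k T" using usU[OF j(1)] Usub by blast
      then show "wf_node k c" using j by (auto simp: Omega_def intro: wf_chain)
    qed
  qed
  have ndt: "is_ndt k T' \<Gamma>n" unfolding is_ndt_def
  proof (intro conjI)
    show "ktree k \<Gamma>n" by (rule ktn)
    show "At_tree \<Gamma>n \<subseteq> At T'"
    proof
      fix f assume "f \<in> At_tree \<Gamma>n"
      then obtain j where j: "j < l" "att_of f (chain (us!j) j)" by (auto simp: At_tree_def \<Gamma>n_def)
      have "f \<in> fst ` set (us!j)" using j(2) by (rule att_chain)
      moreover have "us ! j \<in> Omega k T" using usU[OF j(1)] Usub by blast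
      ultimately show "f \<in> At T'" by (auto simp: Omega_def T'_def At_J)
    qed
    show "\<forall>rd\<in>Delta T'. \<exists>\<alpha> d. cpath \<Gamma>n \<alpha> d \<and> rd \<in> set (sub T' \<alpha>)"
    proof
      fix rd' assume "rd' \<in> Delta T'"
      then obtain rd where rd: "rd \<in> Delta T" "rd' = (fst rd, \<nu> (fst rd))" by (auto simp: T'_def Delta_J)
      then obtain \<alpha> where a: "\<alpha> \<in> U" "rd \<in> set (sub T \<alpha>)" using Ucov by blast
      then obtain j where j: "j < l" "\<alpha> = us ! j" using us lus by (auto simp: in_set_conv_nth)
      have "rd' \<in> set (sub T' \<alpha>)" using a rd by (simp add: T'_def sub_J)
      then show "\<exists>\<alpha> d. cpath \<Gamma>n \<alpha> d \<and> rd' \<in> set (sub T' \<alpha>)" using j cpn by blast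
    qed
    show "\<forall>\<alpha> d. cpath \<Gamma>n \<alpha> d \<longrightarrow> sub T' \<alpha> = [] \<or> d \<in> Pi_rows (sub T' \<alpha>)"
    proof (intro allI impI disjI2)
      fix \<alpha> d assume "cpath \<Gamma>n \<alpha> d"
      then obtain j where j: "j < l" "\<alpha> = us!j" "d = j" using cpn by blast
      show "d \<in> Pi_rows (sub T' \<alpha>)" unfolding Pi_rows_def
      proof
        fix rd' assume "rd' \<in> set (sub T' \<alpha>)"
        then obtain rd where "rd \<in> set (sub T \<alpha>)" "rd' = (fst rd, \<nu> (fst rd))"
          by (auto simp: T'_def sub_J)
        then show "d \<in> snd rd'" using j \<nu>j by (auto simp: sub_def)
      qed
    qed
  qed
  have "psi_tree \<psi> \<Gamma>n \<le> n"
  proof (rule psi_tree_le[OF ktn])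
    fix \<alpha> d assume "cpath \<Gamma>n \<alpha> d"
    then obtain j where j: "j < l" "\<alpha> = us!j" using cpn by blast
    then show "psi_word \<psi> \<alpha> \<le> n" using usU[OF j(1)] Usub by auto
  qed
  moreover have "psi_a \<psi> k T' \<le> psi_tree \<psi> \<Gamma>n"
  proof -
    have "psi_tree \<psi> \<Gamma>n \<in> {psi_tree \<psi> \<Gamma> | \<Gamma>. is_ndt k T' \<Gamma>}" using ndt by blast
    then show ?thesis unfolding psi_a_def using ne' by (simp add: wellorder_Inf_le1)
  qed
  ultimately have pa: "psi_a \<psi> k T' \<le> n" by simp
  obtain \<Gamma>0 where "is_dt k T' \<Gamma>0" using dt_some[OF k1 wf' p0] by blast
  then have "{psi_tree \<psi> \<Gamma> | \<Gamma>. is_dt k T' \<Gamma>} \<noteq> {}" by blast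
  then have "Inf {psi_tree \<psi> \<Gamma> | \<Gamma>. is_dt k T' \<Gamma>} \<in> {psi_tree \<psi> \<Gamma> | \<Gamma>. is_dt k T' \<Gamma>}"
    by (rule Inf_nat_def1)
  then obtain \<Gamma> where G: "is_dt k T' \<Gamma>" "psi_tree \<psi> \<Gamma> = psi_d \<psi> k T'"
    using ne' unfolding psi_d_def by auto
  define h where "h = psi_tree \<psi> \<Gamma>"
  obtain c where c: "\<Gamma> = [c]" using G(1) unfolding is_dt_def by (cases \<Gamma>) auto
  have cwf: "wf_node k c" and cdet: "det_node c"
    using G(1) c unfolding is_dt_def is_ndt_def ktree_def by auto
  have Gcov: "\<forall>rd \<in> Delta T'. \<exists>\<alpha> d. cpath \<Gamma> \<alpha> d \<and> rd \<in> set (sub T' \<alpha>)"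
    and Gcor: "\<forall>\<alpha> d. cpath \<Gamma> \<alpha> d \<longrightarrow> sub T' \<alpha> = [] \<or> d \<in> Pi_rows (sub T' \<alpha>)"
    using G(1) unfolding is_dt_def is_ndt_def by auto
  define P where "P = {(\<alpha>,d). npath c \<alpha> d}"
  have "card P \<le> k ^ h" unfolding P_def
  proof (rule npath_card[OF _ cwf cdet])
    show "0 < k" using k by simp
    show "\<forall>\<alpha> d. npath c \<alpha> d \<longrightarrow> length \<alpha> \<le> h"
    proof (intro allI impI)
      fix \<alpha> d assume "npath c \<alpha> d"
      then have "cpath \<Gamma> \<alpha> d" using c by (simp add: cpath_def)
      then have "psi_word \<psi> \<alpha> \<le> h" unfolding h_def by (rule psi_tree_ge)
      moreover have "length (map fst \<alpha>) \<le> \<psi> (map fst \<alpha>)" using b unfolding bounded_measure_def by blast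
      ultimately show "length \<alpha> \<le> h" by (simp add: psi_word_def)
    qed
  qed
  have "{..<l} \<subseteq> snd ` P"
  proof
    fix j assume "j \<in> {..<l}"
    then have j: "j < l" by simp
    let ?V = "U - {us ! j}"
    have "?V \<subset> U" using usU[OF j] by blast
    then have nc: "\<not> is_cover \<psi> k T n ?V" by (rule Uirr)
    have "(\<Union>\<alpha> \<in> ?V. set (sub T \<alpha>)) \<noteq> Delta T"
    proof
      assume "(\<Union>\<alpha> \<in> ?V. set (sub T \<alpha>)) = Delta T"
      moreover have "finite ?V" using finU by simp
      moreover have "?V \<subseteq> {\<alpha> \<in> Omega k T. psi_word \<psi> \<alpha> \<le> n}" using Usub by blast
      ultimately have "is_cover \<psi> k T n ?V" unfolding is_cover_def by blast
      then show False using nc by blast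
    qed
    moreover have "(\<Union>\<alpha> \<in> ?V. set (sub T \<alpha>)) \<subseteq> Delta T" by (auto simp: sub_def Delta_def)
    ultimately obtain rd where rd: "rd \<in> Delta T" "\<forall>\<alpha>\<in>?V. rd \<notin> set (sub T \<alpha>)" by blast
    then obtain \<alpha> where "\<alpha> \<in> U" "rd \<in> set (sub T \<alpha>)" using Ucov by blast
    then have "\<alpha> = us ! j" using rd(2) by blast
    then have satj: "sat T (us!j) (fst rd)" using \<open>rd \<in> set (sub T \<alpha>)\<close> by (simp add: sub_def)
    have "\<nu> (fst rd) = {j}"
    proof -
      have "i = j" if i: "i < l" "sat T (us!i) (fst rd)" for i
      proof -
        have "rd \<in> set (sub T (us!i))" using rd(1) i(2) by (simp add: sub_def Delta_def)
        then have "us ! i \<notin> ?V" using rd(2) by blast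
        then have "us ! i = us ! j" using usU[OF i(1)] by blast
        then show "i = j" using us(2) lus i(1) j nth_eq_iff_index_eq by metis
      qed
      then have eqs: "{i. i<l \<and> sat T (us!i) (fst rd)} = {j}" using j satj by blast
      have ex: "\<exists>j<l. sat T (us!j) (fst rd)" using j satj by blast
      have "\<nu> (fst rd) = {i. i<l \<and> sat T (us!i) (fst rd)}" unfolding \<nu>_def using ex by (rule if_P)
      then show ?thesis using eqs by simp
    qed
    then have row: "(fst rd, {j}) \<in> Delta T'" using rd(1) unfolding T'_def Delta_J
      by (intro rev_image_eqI[of rd]) simp_all
    then obtain \<beta> d where bd: "cpath \<Gamma> \<beta> d" "(fst rd, {j}) \<in> set (sub T' \<beta>)" using Gcov by blast
    then have "sub T' \<beta> \<noteq> []" by auto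
    then have "d \<in> Pi_rows (sub T' \<beta>)" using Gcor bd(1) by blast
    then have "d \<in> {j}" using bd(2) unfolding Pi_rows_def by fastforce
    then have "(\<beta>, j) \<in> P" using bd(1) c by (simp add: P_def cpath_def)
    then show "j \<in> snd ` P" by (rule rev_image_eqI) simp
  qed
  then have "card {..<l} \<le> card (snd ` P)"
    by (rule card_mono[OF finite_imageI[OF npath_finite[of c, folded P_def]]])
  also have "\<dots> \<le> card P" by (rule card_image_le[OF npath_finite[of c, folded P_def]])
  also have "\<dots> \<le> k ^ h" by fact
  finally have lk: "real l \<le> real k ^ h" by (metis card_lessThan of_nat_le_iff of_nat_power)
  have "log (real k) (real l) \<le> log (real k) (real k ^ h)"
    using lk l0 k by (subst log_le_cancel_iff) auto
  also have "\<dots> = real h" using k by (simp add: log_nat_power)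
  finally have "log (real k) (real l) \<le> real (psi_d \<psi> k T')" using G(2) h_def by simp
  then show ?thesis using vnu pa unfolding T'_def by blast
qed

lemma keep_first_id: "distinct (map fst xs) \<Longrightarrow> keep_first xs = xs"
proof -
  assume d: "distinct (map fst xs)"
  have *: "(\<forall>j < i. fst (xs ! j) \<noteq> fst (xs ! i))" if "i < length xs" for i
    using d that by (auto simp: distinct_conv_nth)
  have "keep_first xs = concat (map (\<lambda>i. [xs ! i]) [0..<length xs])"
    unfolding keep_first_def by (rule arg_cong[where f=concat], rule map_cong) (auto simp: *)
  also have "\<dots> = map (\<lambda>i. xs ! i) [0..<length xs]" by (induction "[0..<length xs]") auto
  also have "\<dots> = xs" by (simp add: map_nth)
  finally show ?thesis .
qed

lemma I_empty:
  assumes wf: "wf_table k T" and ne: "fst T \<noteq> []"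
  shows "I_op {} T = T"
proof -
  have rows: "\<forall>rd\<in>set (snd T). length (fst rd) = length (fst T)" and dk: "distinct (map fst (snd T))"
    using wf unfolding wf_table_def by auto
  have "map (\<lambda>rd. ([fst rd ! i. i \<leftarrow> [0..<length (fst T)], fst T ! i \<notin> {}], snd rd)) (snd T) = snd T"
  proof (rule map_idI)
    fix rd assume "rd \<in> set (snd T)"
    then have "length (fst rd) = length (fst T)" using rows by blast
    then have "map (\<lambda>i. fst rd ! i) [0..<length (fst T)] = fst rd" by (metis map_nth)
    then show "([fst rd ! i. i \<leftarrow> [0..<length (fst T)], fst T ! i \<notin> {}], snd rd) = rd"
      by simp
  qed
  then show ?thesis using ne dk unfolding I_op_def by (simp add: keep_first_id)
qed

theorem lemma5:
  fixes k :: nat and A :: "dtable set" and \<psi> :: "nat list \<Rightarrow> nat"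
  assumes "k \<ge> 2"
    and "closed_class k A" and "nontrivial A"
    and "bounded_measure \<psi>"
    and "\<forall>n. L_fun \<psi> k A n \<noteq> None"
  shows "\<forall>n l. L_fun \<psi> k A n = Some l \<and> l > 0 \<longrightarrow>
           (\<exists>h. H_fun \<psi> k A n = Some h \<and> log (real k) (real l) \<le> real h)"
proof (intro allI impI, elim conjE)
  fix n l assume Ln: "L_fun \<psi> k A n = Some l" and l0: "l > 0"
  have k: "k \<ge> 2" and b: "bounded_measure \<psi>" using assms by auto
  have Ane: "A \<noteq> {}" and AM: "A \<subseteq> M_inf k" and Acl: "closure_class k A = A"
    using assms(2) unfolding closed_class_def by auto
  have wfA: "wf_table k T" if "T \<in> A" for T using AM that by (auto simp: M_inf_def)
  define S where "S = {l_psi \<psi> k T n | T. T \<in> A}"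
  have finS: "finite S" and lS: "l = Max S"
    using Ln unfolding L_fun_def S_def[symmetric] Let_def by (auto split: if_splits)
  have lT: "l_psi \<psi> k T n \<le> l" if "T \<in> A" for T
  proof -
    have "l_psi \<psi> k T n \<in> S" using that unfolding S_def by blast
    then show ?thesis using finS lS by simp
  qed
  have "S \<noteq> {}" using Ane unfolding S_def by blast
  then have "l \<in> S" using finS lS Max_in by blast
  then obtain T0 where T0: "T0 \<in> A" "l_psi \<psi> k T0 n = l" unfolding S_def by blast
  have ne0: "snd T0 \<noteq> []" using T0(2) l0 by (auto simp: l_psi_def)
  obtain U where U: "irr_cover \<psi> k T0 n U" "card U = l" using lpsi_facts(2)[OF b ne0] T0(2) by metis
  obtain \<nu> where nu: "valid_nu k (card (At T0)) \<nu>" "psi_a \<psi> k (J_op \<nu> T0) \<le> n"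
      "log (real k) (real l) \<le> real (psi_d \<psi> k (J_op \<nu> T0))"
    using lb[OF k wfA[OF T0(1)] ne0 b U l0] by blast
  have "J_op \<nu> T0 \<in> closure_table k T0"
  proof -
    have "fst T0 \<noteq> []" using wfA[OF T0(1)] ne0 unfolding wf_table_def by auto
    then have "I_op {} T0 = T0" using I_empty wfA[OF T0(1)] by blast
    then show ?thesis unfolding closure_table_def using nu(1) by force
  qed
  then have T'A: "J_op \<nu> T0 \<in> A" using T0(1) Acl unfolding closure_class_def by blast
  define HS where "HS = {psi_d \<psi> k T | T. T \<in> A \<and> psi_a \<psi> k T \<le> n}"
  have "HS \<subseteq> {..l * n}"
  proof
    fix x assume "x \<in> HS"
    then obtain T where T: "T \<in> A" "psi_a \<psi> k T \<le> n" "x = psi_d \<psi> k T" unfolding HS_def by blast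
    show "x \<in> {..l * n}" using ub[OF k wfA[OF T(1)] b T(2) lT[OF T(1)]] T(3) by simp
  qed
  then have finH: "finite HS" by (rule finite_subset) simp
  have inH: "psi_d \<psi> k (J_op \<nu> T0) \<in> HS" unfolding HS_def using T'A nu(2) by blast
  have "H_fun \<psi> k A n = Some (Max HS)"
    unfolding H_fun_def HS_def[symmetric] Let_def using finH by simp
  moreover have "psi_d \<psi> k (J_op \<nu> T0) \<le> Max HS" using finH inH by (rule Max_ge)
  ultimately show "\<exists>h. H_fun \<psi> k A n = Some h \<and> log (real k) (real l) \<le> real h"
    using nu(3) by (intro exI[of _ "Max HS"]) simp
qed

end
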